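(* Let $Q\subseteq P$ be parabolic subgroups of a semisimple algebraic group $G$ and let $\theta>\phi$ in $W/W_Q$ with $\pi_P(\theta)>\pi_P(\phi)$ in $W/W_P$. Then there exists $\psi\in W/W_Q$ covered by $\theta$ such that $\psi\ge\phi$ and $\pi_P(\theta)>\pi_P(\psi)$.
   Context: $G$ is a semisimple algebraic group with maximal torus $T$, Borel subgroup $B\supseteq T$ and Weyl group $W$; parabolic subgroups are closed subgroups containing $B$, with Weyl groups $W_Q\subseteq W$. $W/W_Q$ carries the Bruhat order (a graded poset), and $\pi_P:W/W_Q\to W/W_P$ is the natural (monotone) projection for $Q\subseteq P$. *)

theory Defs
  imports "HOL-Analysis.Analysis"
begin

text \<open>Root-system model of the Weyl group of a semisimple group G with maximal torus T
and Borel B: the root system R of (G,T) in a real Euclidean space, the base (simple roots)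
determined by B, the Weyl group generated by simple reflections, Bruhat order, and
parabolic subgroups P \<supseteq> B corresponding to subsets J of the simple roots.\<close>

definition refl :: "'a::euclidean_space \<Rightarrow> 'a \<Rightarrow> 'a" where
  "refl \<alpha> v = v - (2 * (v \<bullet> \<alpha>) / (\<alpha> \<bullet> \<alpha>)) *\<^sub>R \<alpha>"

text \<open>Reduced crystallographic root system spanning the space (semisimple case).\<close>
definition root_system :: "'a::euclidean_space set \<Rightarrow> bool" where
  "root_system R \<longleftrightarrow> finite R \<and> 0 \<notin> R \<and> span R = UNIV
     \<and> (\<forall>\<alpha>\<in>R. refl \<alpha> ` R = R)
     \<and> (\<forall>\<alpha>\<in>R. \<forall>\<beta>\<in>R. 2 * (\<beta> \<bullet> \<alpha>) / (\<alpha> \<bullet> \<alpha>) \<in> \<int>)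
     \<and> (\<forall>\<alpha>\<in>R. \<forall>c. c *\<^sub>R \<alpha> \<in> R \<longrightarrow> c = 1 \<or> c = -1)"

definition is_base :: "'a::euclidean_space set \<Rightarrow> 'a set \<Rightarrow> bool" where
  "is_base R \<Delta> \<longleftrightarrow> \<Delta> \<subseteq> R \<and> independent \<Delta>
     \<and> (\<forall>\<beta>\<in>R. \<exists>c. \<beta> = (\<Sum>\<alpha>\<in>\<Delta>. c \<alpha> *\<^sub>R \<alpha>)
                   \<and> ((\<forall>\<alpha>\<in>\<Delta>. c \<alpha> \<ge> 0) \<or> (\<forall>\<alpha>\<in>\<Delta>. c \<alpha> \<le> 0)))"

inductive_set refl_group :: "'a::euclidean_space set \<Rightarrow> ('a \<Rightarrow> 'a) set"
  for J :: "'a set" where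
  id_in: "id \<in> refl_group J"
| step: "w \<in> refl_group J \<Longrightarrow> \<alpha> \<in> J \<Longrightarrow> refl \<alpha> \<circ> w \<in> refl_group J"

definition wlen :: "'a::euclidean_space set \<Rightarrow> ('a \<Rightarrow> 'a) \<Rightarrow> nat" where
  "wlen \<Delta> w = (LEAST n. \<exists>xs. length xs = n \<and> set xs \<subseteq> \<Delta> \<and> w = foldr (\<lambda>\<alpha> f. refl \<alpha> \<circ> f) xs id)"

definition bruhat_step :: "'a::euclidean_space set \<Rightarrow> 'a set \<Rightarrow> ('a \<Rightarrow> 'a) \<Rightarrow> ('a \<Rightarrow> 'a) \<Rightarrow> bool" where
  "bruhat_step R \<Delta> w w' \<longleftrightarrow> w \<in> refl_group \<Delta> \<and>
     (\<exists>\<beta>\<in>R. w' = w \<circ> refl \<beta> \<and> wlen \<Delta> w < wlen \<Delta> w')"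

definition bruhat_le :: "'a::euclidean_space set \<Rightarrow> 'a set \<Rightarrow> ('a \<Rightarrow> 'a) \<Rightarrow> ('a \<Rightarrow> 'a) \<Rightarrow> bool" where
  "bruhat_le R \<Delta> = (bruhat_step R \<Delta>)\<^sup>*\<^sup>*"

definition coset :: "'a::euclidean_space set \<Rightarrow> ('a \<Rightarrow> 'a) \<Rightarrow> ('a \<Rightarrow> 'a) set" where
  "coset J w = (\<lambda>u. w \<circ> u) ` refl_group J"

definition quot :: "'a::euclidean_space set \<Rightarrow> 'a set \<Rightarrow> ('a \<Rightarrow> 'a) set set" where
  "quot \<Delta> J = coset J ` refl_group \<Delta>"

definition min_rep :: "'a::euclidean_space set \<Rightarrow> ('a \<Rightarrow> 'a) set \<Rightarrow> ('a \<Rightarrow> 'a) \<Rightarrow> bool" where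
  "min_rep \<Delta> C c \<longleftrightarrow> c \<in> C \<and> (\<forall>c'\<in>C. wlen \<Delta> c \<le> wlen \<Delta> c')"

definition quot_le :: "'a::euclidean_space set \<Rightarrow> 'a set \<Rightarrow> ('a \<Rightarrow> 'a) set \<Rightarrow> ('a \<Rightarrow> 'a) set \<Rightarrow> bool" where
  "quot_le R \<Delta> C D \<longleftrightarrow> (\<exists>c d. min_rep \<Delta> C c \<and> min_rep \<Delta> D d \<and> bruhat_le R \<Delta> c d)"

definition quot_less :: "'a::euclidean_space set \<Rightarrow> 'a set \<Rightarrow> ('a \<Rightarrow> 'a) set \<Rightarrow> ('a \<Rightarrow> 'a) set \<Rightarrow> bool" where
  "quot_less R \<Delta> C D \<longleftrightarrow> quot_le R \<Delta> C D \<and> C \<noteq> D"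

definition quot_covers :: "'a::euclidean_space set \<Rightarrow> 'a set \<Rightarrow> 'a set \<Rightarrow> ('a \<Rightarrow> 'a) set \<Rightarrow> ('a \<Rightarrow> 'a) set \<Rightarrow> bool" where
  "quot_covers R \<Delta> J D C \<longleftrightarrow> C \<in> quot \<Delta> J \<and> D \<in> quot \<Delta> J \<and> quot_less R \<Delta> C D
     \<and> \<not> (\<exists>E\<in>quot \<Delta> J. quot_less R \<Delta> C E \<and> quot_less R \<Delta> E D)"

definition proj :: "'a::euclidean_space set \<Rightarrow> ('a \<Rightarrow> 'a) set \<Rightarrow> ('a \<Rightarrow> 'a) set" where
  "proj JP C = (\<Union>w\<in>C. coset JP w)"

end

theory Submission
  imports Defs
begin

definition orth :: "('a::euclidean_space \<Rightarrow> 'a) \<Rightarrow> bool" where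
 "orth f \<longleftrightarrow> linear f \<and> (\<forall>x y. f x \<bullet> f y = x \<bullet> y)"

lemma refl_linear: "linear (refl a)"
  unfolding refl_def by (intro linearI) (auto simp: inner_add_left algebra_simps add_divide_distrib scaleR_add_left)

lemma refl_inner: "refl a x \<bullet> refl a y = x \<bullet> y"
proof (cases "a = 0")
  case True thus ?thesis by (simp add: refl_def)
next
  case False
  hence "a \<bullet> a \<noteq> 0" by simp
  thus ?thesis unfolding refl_def
    by (simp add: inner_diff_left inner_diff_right field_simps inner_commute algebra_simps)
qed

lemma orth_refl: "orth (refl a)" by (simp add: orth_def refl_linear refl_inner)

lemma orth_comp: "orth f \<Longrightarrow> orth g \<Longrightarrow> orth (f \<circ> g)"
  by (auto simp: orth_def linear_compose)

lemma refl_refl: "refl a (refl a v) = v"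
proof (cases "a = 0")
  case True thus ?thesis by (simp add: refl_def)
next
  case False
  hence "a \<bullet> a \<noteq> 0" by simp
  thus ?thesis unfolding refl_def
    by (simp add: inner_diff_left field_simps algebra_simps)
qed

lemma refl_refl_comp: "refl a \<circ> refl a = id" by (auto simp: refl_refl)

lemma refl_self: "refl a a = - a"
  by (cases "a = 0") (auto simp: refl_def field_simps algebra_simps scaleR_2)

lemma refl_neg: "refl (-a) = refl a"
  by (auto simp: refl_def fun_eq_iff)

lemma refl_conj: "orth f \<Longrightarrow> refl (f a) \<circ> f = f \<circ> refl a"
  unfolding orth_def refl_def fun_eq_iff
  by (auto simp: linear_diff linear_cmul)
definition prodl :: "'a::euclidean_space list \<Rightarrow> 'a \<Rightarrow> 'a" where "prodl xs = foldr (\<lambda>\<alpha> f. refl \<alpha> \<circ> f) xs id"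

lemma prodl_Nil[simp]: "prodl [] = id" by (simp add: prodl_def)
lemma prodl_Cons[simp]: "prodl (a # xs) = refl a \<circ> prodl xs" by (simp add: prodl_def)
lemma prodl_append: "prodl (xs @ ys) = prodl xs \<circ> prodl ys"
  by (induction xs) (auto simp: comp_assoc)

lemma rg_prodl: "set xs \<subseteq> J \<Longrightarrow> prodl xs \<in> refl_group J"
  by (induction xs) (auto intro: refl_group.intros)

lemma rg_ex: "w \<in> refl_group J \<Longrightarrow> \<exists>xs. set xs \<subseteq> J \<and> w = prodl xs"
proof (induction rule: refl_group.induct)
  case id_in thus ?case by (intro exI[of _ "[]"]) simp
next
  case (step w a) then obtain xs where "set xs \<subseteq> J" "w = prodl xs" by blast
  thus ?case using step by (intro exI[of _ "a # xs"]) simp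
qed

lemma rg_comp: "v \<in> refl_group J \<Longrightarrow> w \<in> refl_group J \<Longrightarrow> v \<circ> w \<in> refl_group J"
  by (metis rg_ex rg_prodl prodl_append set_append Un_subset_iff)

lemma rg_refl: "a \<in> J \<Longrightarrow> refl a \<in> refl_group J"
  using rg_prodl[of "[a]" J] by simp

lemma rg_mono: "J \<subseteq> K \<Longrightarrow> w \<in> refl_group J \<Longrightarrow> w \<in> refl_group K"
  by (metis rg_ex rg_prodl order_trans)

lemma prodl_rev: "prodl (rev xs) \<circ> prodl xs = id"
proof (induction xs)
  case Nil thus ?case by simp
next
  case (Cons a xs)
  have "prodl (rev (a # xs)) \<circ> prodl (a # xs) = prodl (rev xs) \<circ> (refl a \<circ> refl a) \<circ> prodl xs"
    by (simp add: prodl_append comp_assoc)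
  also have "\<dots> = id" by (simp only: refl_refl_comp comp_id Cons.IH)
  finally show ?case .
qed

lemma rg_inv: assumes "w \<in> refl_group J" shows "\<exists>w'\<in>refl_group J. w' \<circ> w = id \<and> w \<circ> w' = id"
proof -
  obtain xs where xs: "set xs \<subseteq> J" "w = prodl xs" using rg_ex assms by blast
  have "prodl (rev xs) \<in> refl_group J" using rg_prodl[of "rev xs" J] xs(1) by simp
  thus ?thesis using xs prodl_rev[of xs] prodl_rev[of "rev xs"]
    by (intro bexI[of _ "prodl (rev xs)"] conjI) auto
qed

lemma orth_rg: "w \<in> refl_group J \<Longrightarrow> orth w"
proof (induction rule: refl_group.induct)
  case id_in show ?case by (simp add: orth_def linear_iff)
next
  case (step w a) show ?case by (rule orth_comp[OF orth_refl step.IH])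
qed

lemma orth_lin: "orth w \<Longrightarrow> linear w" by (simp add: orth_def)

lemma delta_sum: "finite S \<Longrightarrow> a \<in> S \<Longrightarrow> (\<Sum>x\<in>S. (if x = a then k else 0) *\<^sub>R (x::'a::real_vector)) = k *\<^sub>R a"
proof -
  assume "finite S" "a \<in> S"
  have "(\<Sum>x\<in>S. (if x = a then k else 0) *\<^sub>R x) = (\<Sum>x\<in>S. if x = a then k *\<^sub>R x else 0)"
    by (rule sum.cong) auto
  also have "\<dots> = k *\<^sub>R a" using \<open>finite S\<close> \<open>a \<in> S\<close> by (simp add: sum.delta)
  finally show ?thesis .
qed

locale RS =
  fixes R :: "'a::euclidean_space set" and D :: "'a set"
  assumes rs: "root_system R" and base: "is_base R D"
begin

lemma finR: "finite R" and zR: "0 \<notin> R" and reflR: "\<And>a. a\<in>R \<Longrightarrow> refl a ` R = R"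
  and redR: "\<And>a c. a \<in> R \<Longrightarrow> c *\<^sub>R a \<in> R \<Longrightarrow> c = 1 \<or> c = -1"
  using rs unfolding root_system_def by blast+

lemma DR: "D \<subseteq> R" and indD: "independent D"
  and decomp: "\<And>b. b \<in> R \<Longrightarrow> \<exists>c. b = (\<Sum>a\<in>D. c a *\<^sub>R a) \<and> ((\<forall>a\<in>D. c a \<ge> 0) \<or> (\<forall>a\<in>D. c a \<le> 0))"
  using base unfolding is_base_def by blast+

lemma finD: "finite D" using finR DR finite_subset by blast

lemma reflR': "a \<in> R \<Longrightarrow> b \<in> R \<Longrightarrow> refl a b \<in> R" using reflR by blast

lemma negR: "b \<in> R \<Longrightarrow> -b \<in> R" using reflR'[of b b] by (simp add: refl_self)

lemma coef_unique: assumes "(\<Sum>a\<in>D. c a *\<^sub>R a) = (\<Sum>a\<in>D. d a *\<^sub>R a)" "x \<in> D" shows "c x = d x"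
proof -
  have s0: "(\<Sum>a\<in>D. (c a - d a) *\<^sub>R a) = 0" using assms(1) by (simp add: scaleR_diff_left sum_subtractf)
  have nd: "\<And>u. (\<Sum>v\<in>D. u v *\<^sub>R v) = 0 \<Longrightarrow> \<forall>v\<in>D. u v = 0"
  proof -
    fix u assume u: "(\<Sum>v\<in>D. u v *\<^sub>R v) = 0"
    show "\<forall>v\<in>D. u v = 0"
    proof (rule ccontr)
      assume "\<not> (\<forall>v\<in>D. u v = 0)"
      hence "dependent D" unfolding dependent_finite[OF finD] using u by blast
      thus False using indD by simp
    qed
  qed
  have "\<forall>a\<in>D. c a - d a = 0" using nd[of "\<lambda>a. c a - d a"] s0 by simp
  thus ?thesis using assms(2) by auto
qed

definition pos where "pos b \<longleftrightarrow> b \<in> R \<and> (\<exists>c. b = (\<Sum>a\<in>D. c a *\<^sub>R a) \<and> (\<forall>a\<in>D. c a \<ge> 0))"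
definition neg where "neg b \<longleftrightarrow> b \<in> R \<and> (\<exists>c. b = (\<Sum>a\<in>D. c a *\<^sub>R a) \<and> (\<forall>a\<in>D. c a \<le> 0))"

lemma pos_or_neg: assumes "b \<in> R" shows "pos b \<or> neg b"
proof -
  obtain c where c: "b = (\<Sum>a\<in>D. c a *\<^sub>R a)" "(\<forall>a\<in>D. c a \<ge> 0) \<or> (\<forall>a\<in>D. c a \<le> 0)"
    using decomp[OF assms] by blast
  from c(2) show ?thesis
  proof
    assume "\<forall>a\<in>D. c a \<ge> 0" thus ?thesis unfolding pos_def using assms c(1) by blast
  next
    assume "\<forall>a\<in>D. c a \<le> 0" thus ?thesis unfolding neg_def using assms c(1) by blast
  qed
qed

lemma not_pos_neg: assumes "pos b" "neg b" shows False
proof -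
  from assms(1) have "b \<in> R \<and> (\<exists>c. b = (\<Sum>a\<in>D. c a *\<^sub>R a) \<and> (\<forall>a\<in>D. c a \<ge> 0))" unfolding pos_def .
  then obtain c where b: "b \<in> R" "b = (\<Sum>a\<in>D. c a *\<^sub>R a)" "\<forall>a\<in>D. c a \<ge> 0" by blast
  from assms(2) have "\<exists>d. b = (\<Sum>a\<in>D. d a *\<^sub>R a) \<and> (\<forall>a\<in>D. d a \<le> 0)" unfolding neg_def by blast
  then obtain d where b': "b = (\<Sum>a\<in>D. d a *\<^sub>R a)" "\<forall>a\<in>D. d a \<le> 0" by blast
  have "\<forall>a\<in>D. c a = 0"
  proof
    fix a assume a: "a \<in> D"
    have "c a = d a" using coef_unique[of c d a] b(2) b'(1) a by simp
    thus "c a = 0" using b(3) b'(2) a by force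
  qed
  hence "b = 0" using b(2) by simp
  thus False using b(1) zR by simp
qed

lemma neg_not_pos: "b \<in> R \<Longrightarrow> neg b \<longleftrightarrow> \<not> pos b"
  using pos_or_neg not_pos_neg by blast

lemma pos_uminus: assumes "pos b" shows "neg (-b)"
proof -
  from assms have "b \<in> R \<and> (\<exists>c. b = (\<Sum>a\<in>D. c a *\<^sub>R a) \<and> (\<forall>a\<in>D. c a \<ge> 0))" unfolding pos_def .
  then obtain c where c: "b \<in> R" "b = (\<Sum>a\<in>D. c a *\<^sub>R a)" "\<forall>a\<in>D. c a \<ge> 0" by blast
  have m: "-b \<in> R" using negR c(1) by blast
  have e: "-b = (\<Sum>a\<in>D. (- c a) *\<^sub>R a)" using c(2) by (simp add: sum_negf)
  show ?thesis unfolding neg_def using m e c(3) by (intro conjI exI[of _ "\<lambda>a. - c a"]) simp_all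
qed

lemma neg_uminus: assumes "neg b" shows "pos (-b)"
proof -
  from assms have "b \<in> R \<and> (\<exists>c. b = (\<Sum>a\<in>D. c a *\<^sub>R a) \<and> (\<forall>a\<in>D. c a \<le> 0))" unfolding neg_def .
  then obtain c where c: "b \<in> R" "b = (\<Sum>a\<in>D. c a *\<^sub>R a)" "\<forall>a\<in>D. c a \<le> 0" by blast
  have m: "-b \<in> R" using negR c(1) by blast
  have e: "-b = (\<Sum>a\<in>D. (- c a) *\<^sub>R a)" using c(2) by (simp add: sum_negf)
  show ?thesis unfolding pos_def using m e c(3) by (intro conjI exI[of _ "\<lambda>a. - c a"]) simp_all
qed

lemma pos_simple: assumes "a \<in> D" shows "pos a"
proof -
  have "a = (\<Sum>x\<in>D. (if x = a then 1 else 0) *\<^sub>R x)"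
    using assms finD by (simp add: delta_sum)
  thus ?thesis unfolding pos_def using assms DR by (intro conjI exI[of _ "\<lambda>x. if x = a then 1 else 0"]) auto
qed

lemma simple_nonzero: "a \<in> D \<Longrightarrow> a \<noteq> 0" using DR zR by blast

lemma pos_refl_simple: assumes a: "a \<in> D" and b: "pos b" and ne: "b \<noteq> a" shows "pos (refl a b)"
proof (rule ccontr)
  assume np: "\<not> pos (refl a b)"
  from b have b': "b \<in> R \<and> (\<exists>c. b = (\<Sum>a\<in>D. c a *\<^sub>R a) \<and> (\<forall>a\<in>D. c a \<ge> 0))" unfolding pos_def .
  from conjunct2[OF b'] obtain c where cc: "b = (\<Sum>x\<in>D. c x *\<^sub>R x) \<and> (\<forall>x\<in>D. c x \<ge> 0)" ..
  note bR = conjunct1[OF b'] and bc = conjunct1[OF cc] and c0 = conjunct2[OF cc]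
  have rR: "refl a b \<in> R" using reflR' a DR bR by blast
  hence "neg (refl a b)" using np pos_or_neg by blast
  hence nn: "refl a b \<in> R \<and> (\<exists>d. refl a b = (\<Sum>x\<in>D. d x *\<^sub>R x) \<and> (\<forall>x\<in>D. d x \<le> 0))" unfolding neg_def .
  from conjunct2[OF nn] obtain d where dd: "refl a b = (\<Sum>x\<in>D. d x *\<^sub>R x) \<and> (\<forall>x\<in>D. d x \<le> 0)" ..
  note rd = conjunct1[OF dd] and d0 = conjunct2[OF dd]
  define k where "k = 2 * (b \<bullet> a) / (a \<bullet> a)"
  have ak: "(\<Sum>x\<in>D. (if x = a then k else 0) *\<^sub>R x) = k *\<^sub>R a"
    using a finD by (simp add: delta_sum)
  have e0: "refl a b = b - k *\<^sub>R a" by (simp add: refl_def k_def)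
  have e2: "(\<Sum>x\<in>D. (c x - (if x = a then k else 0)) *\<^sub>R x) = (\<Sum>x\<in>D. c x *\<^sub>R x) - (\<Sum>x\<in>D. (if x = a then k else 0) *\<^sub>R x)"
    by (simp only: scaleR_diff_left sum_subtractf)
  have e3: "(\<Sum>x\<in>D. (c x - (if x = a then k else 0)) *\<^sub>R x) = b - k *\<^sub>R a"
    using e2 ak bc by simp
  have e1: "refl a b = (\<Sum>x\<in>D. (c x - (if x = a then k else 0)) *\<^sub>R x)"
    using e0 e3 by simp
  have cd: "\<forall>x\<in>D. c x - (if x = a then k else 0) = d x"
  proof
    fix x assume "x \<in> D"
    thus "c x - (if x = a then k else 0) = d x"
      using coef_unique[of "\<lambda>x. c x - (if x = a then k else 0)" d x] e1 rd by simp
  qed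
  have "\<forall>x\<in>D. x \<noteq> a \<longrightarrow> c x = 0"
  proof (intro ballI impI)
    fix x assume x: "x \<in> D" "x \<noteq> a"
    hence "c x = d x" using cd by auto
    thus "c x = 0" using c0[rule_format, OF x(1)] d0[rule_format, OF x(1)] by linarith
  qed
  hence "b = (\<Sum>x\<in>D. (if x = a then c a else 0) *\<^sub>R x)" by (intro trans[OF bc] sum.cong) auto
  also have "\<dots> = c a *\<^sub>R a" using a finD by (simp add: delta_sum)
  finally have bca: "b = c a *\<^sub>R a" .
  hence "c a *\<^sub>R a \<in> R" using bR by simp
  hence "c a = 1 \<or> c a = -1" using redR a DR by blast
  hence "c a = 1" using c0 a by fastforce
  thus False using ne bca by simp
qed

lemma posR: "pos b \<Longrightarrow> b \<in> R" by (simp add: pos_def)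
lemma negR': "neg b \<Longrightarrow> b \<in> R" by (simp add: neg_def)

abbreviation "W \<equiv> refl_group D"
abbreviation "l \<equiv> wlen D"

lemma W_R: "w \<in> W \<Longrightarrow> w ` R = R"
proof (induction rule: refl_group.induct)
  case id_in thus ?case by simp
next
  case (step w a)
  have "(refl a \<circ> w) ` R = refl a ` (w ` R)" by (rule image_comp[symmetric])
  also have "\<dots> = refl a ` R" using step.IH by simp
  also have "\<dots> = R" using reflR DR step.hyps(2) by blast
  finally show ?case .
qed

lemma W_R': "w \<in> W \<Longrightarrow> b \<in> R \<Longrightarrow> w b \<in> R" using W_R by blast

lemma W_neg: "w \<in> refl_group J \<Longrightarrow> w (- b) = - w b"
  using orth_rg orth_lin linear_neg by blast

lemma W_refl: "a \<in> D \<Longrightarrow> refl a \<in> W" using rg_refl .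

lemma wlen_ex: assumes "w \<in> W" shows "\<exists>xs. length xs = l w \<and> set xs \<subseteq> D \<and> w = prodl xs"
proof -
  obtain xs where "set xs \<subseteq> D" "w = prodl xs" using rg_ex assms by blast
  hence "\<exists>n xs. length xs = n \<and> set xs \<subseteq> D \<and> w = prodl xs" by blast
  from LeastI_ex[OF this] show ?thesis unfolding wlen_def prodl_def by blast
qed

lemma wlen_le: "set xs \<subseteq> D \<Longrightarrow> l (prodl xs) \<le> length xs"
  unfolding wlen_def prodl_def by (rule Least_le) blast

lemma wlen_id[simp]: "l id = 0" using wlen_le[of "[]"] by simp

lemma wlen_0: "w \<in> W \<Longrightarrow> l w = 0 \<Longrightarrow> w = id"
  using wlen_ex by fastforce

lemma wlen_comp: assumes "v \<in> W" "w \<in> W" shows "l (v \<circ> w) \<le> l v + l w"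
proof -
  obtain xs ys where "length xs = l v" "set xs \<subseteq> D" "v = prodl xs" "length ys = l w" "set ys \<subseteq> D" "w = prodl ys"
    using wlen_ex assms by metis
  thus ?thesis using wlen_le[of "xs @ ys"] by (simp add: prodl_append)
qed

lemma wlen_refl: "a \<in> D \<Longrightarrow> l (refl a) \<le> 1" using wlen_le[of "[a]"] by simp

lemma ldesc_ex: assumes "w \<in> W" "w \<noteq> id" shows "\<exists>a\<in>D. l (refl a \<circ> w) < l w"
proof -
  obtain xs where xs: "length xs = l w" "set xs \<subseteq> D" "w = prodl xs" using wlen_ex assms by blast
  then obtain a ys where xa: "xs = a # ys" using assms(2) by (cases xs) auto
  hence e: "refl a \<circ> w = prodl ys" using xs by (simp add: comp_assoc[symmetric] refl_refl_comp)
  have 1: "l (refl a \<circ> w) \<le> length ys" unfolding e using wlen_le[of ys] xs xa by simp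
  have "a \<in> D" "length ys < l w" using xs xa by auto
  thus ?thesis using 1 by (meson le_less_trans)
qed

lemma root_lemma: "set xs \<subseteq> D \<Longrightarrow> pos b \<Longrightarrow> neg (prodl xs b) \<Longrightarrow>
   \<exists>ys. set ys \<subseteq> set xs \<and> length ys < length xs \<and> prodl ys = prodl xs \<circ> refl b"
proof (induction xs)
  case Nil thus ?case using not_pos_neg by simp
next
  case (Cons a xs)
  have a: "a \<in> D" and xsD: "set xs \<subseteq> D" using Cons by auto
  have gR: "prodl xs b \<in> R" using W_R' rg_prodl[OF xsD] posR Cons.prems by blast
  show ?case
  proof (cases "neg (prodl xs b)")
    case True
    then obtain ys where "set ys \<subseteq> set xs" "length ys < length xs" "prodl ys = prodl xs \<circ> refl b"
      using Cons xsD by blast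
    thus ?thesis by (intro exI[of _ "a # ys"]) (auto simp: comp_assoc)
  next
    case False
    hence pg: "pos (prodl xs b)" using gR pos_or_neg by blast
    have "neg (refl a (prodl xs b))" using Cons.prems by simp
    hence ga: "prodl xs b = a" using pos_refl_simple[OF a pg] not_pos_neg by blast
    have "refl a \<circ> prodl xs = prodl xs \<circ> refl b"
      using refl_conj[OF orth_rg[OF rg_prodl[OF xsD]], of b] ga by simp
    hence "prodl (a # xs) \<circ> refl b = (prodl xs \<circ> refl b) \<circ> refl b"
      by (simp only: prodl_Cons)
    also have "\<dots> = prodl xs" by (simp only: comp_assoc refl_refl_comp comp_id)
    finally have fin: "prodl (a # xs) \<circ> refl b = prodl xs" .
    show ?thesis proof (intro exI[of _ xs] conjI)
      show "set xs \<subseteq> set (a # xs)" by auto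
      show "length xs < length (a # xs)" by simp
      show "prodl xs = prodl (a # xs) \<circ> refl b" using fin by (rule sym)
    qed
  qed
qed

lemma len_down: assumes "w \<in> W" "pos b" "neg (w b)" shows "w \<circ> refl b \<in> W \<and> l (w \<circ> refl b) < l w"
proof -
  obtain xs where xs: "length xs = l w" "set xs \<subseteq> D" "w = prodl xs" using wlen_ex assms by blast
  then obtain ys where ys: "set ys \<subseteq> set xs" "length ys < length xs" "prodl ys = w \<circ> refl b"
    using root_lemma assms by blast
  thus ?thesis using wlen_le[of ys] xs rg_prodl[of ys D] by force
qed

lemma len_up: assumes "w \<in> W" "w \<circ> refl b \<in> W" "pos b" "pos (w b)" shows "l w < l (w \<circ> refl b)"
proof -
  have e: "(w \<circ> refl b) \<circ> refl b = w" by (simp only: comp_assoc refl_refl_comp comp_id)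
  have "(w \<circ> refl b) b = - w b" using W_neg assms(1) by (simp add: refl_self)
  hence n: "neg ((w \<circ> refl b) b)" using pos_uminus assms by simp
  from len_down[OF assms(2,3) n] have "l ((w \<circ> refl b) \<circ> refl b) < l (w \<circ> refl b)" by blast
  thus ?thesis by (simp only: e)
qed

lemma len_iff: assumes "w \<in> W" "w \<circ> refl b \<in> W" "pos b" shows "l w < l (w \<circ> refl b) \<longleftrightarrow> pos (w b)"
proof
  assume "pos (w b)" thus "l w < l (w \<circ> refl b)" using len_up assms by blast
next
  assume lt: "l w < l (w \<circ> refl b)"
  show "pos (w b)"
  proof (rule ccontr)
    assume "\<not> pos (w b)"
    moreover have "w b \<in> R" using W_R' assms(1) posR assms(3) by blast
    ultimately have "neg (w b)" using pos_or_neg by blast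
    hence "l (w \<circ> refl b) < l w" using len_down assms by blast
    thus False using lt by simp
  qed
qed

lemma len_ne: assumes "w \<in> W" "w \<circ> refl b \<in> W" "b \<in> R" shows "l (w \<circ> refl b) \<noteq> l w"
proof -
  obtain b' where b': "pos b'" "refl b' = refl b"
  proof (cases "pos b")
    case True thus ?thesis using that by blast
  next
    case False hence "neg b" using pos_or_neg assms(3) by blast
    hence "pos (-b)" by (rule neg_uminus)
    thus ?thesis using that refl_neg by blast
  qed
  have wb: "w \<circ> refl b' \<in> W" using b' assms by simp
  have "w b' \<in> R" using W_R' assms(1) posR b'(1) by blast
  hence "pos (w b') \<or> neg (w b')" using pos_or_neg by blast
  thus ?thesis
  proof
    assume "pos (w b')" thus ?thesis using len_up[OF assms(1) wb b'(1)] b'(2) by simp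
  next
    assume "neg (w b')" thus ?thesis using len_down[OF assms(1) b'(1)] b'(2) by simp
  qed
qed

lemma lmul: assumes "a \<in> D" "w \<in> W" shows "\<exists>g\<in>R. w g = a \<and> refl a \<circ> w = w \<circ> refl g"
proof -
  have "a \<in> w ` R" using W_R[OF assms(2)] assms(1) DR by auto
  then obtain g where g: "g \<in> R" "a = w g" by blast
  have "refl (w g) \<circ> w = w \<circ> refl g" by (rule refl_conj[OF orth_rg[OF assms(2)]])
  thus ?thesis using g by blast
qed

lemma len_lmul: assumes "a \<in> D" "w \<in> W" shows "l (refl a \<circ> w) = l w + 1 \<or> l (refl a \<circ> w) + 1 = l w"
proof -
  obtain g where g: "g \<in> R" "refl a \<circ> w = w \<circ> refl g" using lmul assms by blast
  have sW: "refl a \<circ> w \<in> W" using assms rg_comp W_refl by blast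
  have ne: "l (refl a \<circ> w) \<noteq> l w" using len_ne[OF assms(2) _ g(1)] g sW by simp
  have "l (refl a \<circ> w) \<le> l (refl a) + l w" using wlen_comp sW assms W_refl by blast
  hence 1: "l (refl a \<circ> w) \<le> l w + 1" using wlen_refl[OF assms(1)] by simp
  have "w = refl a \<circ> (refl a \<circ> w)" by (simp add: comp_assoc[symmetric] refl_refl_comp)
  hence "l w \<le> l (refl a) + l (refl a \<circ> w)" using wlen_comp[OF W_refl[OF assms(1)] sW] by simp
  hence 2: "l w \<le> l (refl a \<circ> w) + 1" using wlen_refl[OF assms(1)] by simp
  show ?thesis using 1 2 ne by linarith
qed

lemma len_rmul: assumes "a \<in> D" "w \<in> W" shows "l (w \<circ> refl a) = l w + 1 \<or> l (w \<circ> refl a) + 1 = l w"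
proof -
  have sW: "w \<circ> refl a \<in> W" using assms rg_comp W_refl by blast
  have ne: "l (w \<circ> refl a) \<noteq> l w" using len_ne[OF assms(2) sW] assms DR by blast
  have "l (w \<circ> refl a) \<le> l w + l (refl a)" using wlen_comp sW assms W_refl by blast
  hence 1: "l (w \<circ> refl a) \<le> l w + 1" using wlen_refl[OF assms(1)] by simp
  have "w = (w \<circ> refl a) \<circ> refl a" by (simp add: comp_assoc refl_refl_comp)
  hence "l w \<le> l (w \<circ> refl a) + l (refl a)" using wlen_comp[OF sW W_refl[OF assms(1)]] by simp
  hence 2: "l w \<le> l (w \<circ> refl a) + 1" using wlen_refl[OF assms(1)] by simp
  show ?thesis using 1 2 ne by linarith
qed

abbreviation "bs \<equiv> bruhat_step R D"
abbreviation "ble \<equiv> bruhat_le R D"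

lemma bs_W: "bs u v \<Longrightarrow> u \<in> W" by (simp add: bruhat_step_def)
lemma bs_len: "bs u v \<Longrightarrow> l u < l v" by (auto simp: bruhat_step_def)
lemma bs_ble: "bs u v \<Longrightarrow> ble u v" by (simp add: bruhat_le_def)
lemma ble_refl[simp]: "ble u u" by (simp add: bruhat_le_def)
lemma ble_trans: "ble u v \<Longrightarrow> ble v w \<Longrightarrow> ble u w" by (simp add: bruhat_le_def)
lemma ble_step: "ble u v \<Longrightarrow> bs v w \<Longrightarrow> ble u w" by (simp add: bruhat_le_def)
lemma step_ble: "bs u v \<Longrightarrow> ble v w \<Longrightarrow> ble u w" by (simp add: bruhat_le_def)

lemma ble_len: "ble u v \<Longrightarrow> u = v \<or> l u < l v"
  unfolding bruhat_le_def
  by (induction rule: rtranclp_induct) (auto dest: bs_len)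

lemma ble_W: "ble u v \<Longrightarrow> v \<in> W \<Longrightarrow> u \<in> W"
  unfolding bruhat_le_def
  by (induction rule: converse_rtranclp_induct) (auto dest: bs_W)

lemma step_intro: "u \<in> W \<Longrightarrow> b \<in> R \<Longrightarrow> l u < l (u \<circ> refl b) \<Longrightarrow> bs u (u \<circ> refl b)"
  by (auto simp: bruhat_step_def)

lemma ls_step: assumes "a \<in> D" "w \<in> W" "l w < l (refl a \<circ> w)" shows "bs w (refl a \<circ> w)"
proof -
  obtain g where "g \<in> R" "refl a \<circ> w = w \<circ> refl g" using lmul assms by blast
  thus ?thesis using step_intro[of w g] assms by simp
qed

lemma ls_step': assumes "a \<in> D" "w \<in> W" "l (refl a \<circ> w) < l w" shows "bs (refl a \<circ> w) w"
proof -
  have e: "refl a \<circ> (refl a \<circ> w) = w" by (simp only: comp_assoc[symmetric] refl_refl_comp id_comp)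
  have "refl a \<circ> w \<in> W" using assms rg_comp W_refl by blast
  from ls_step[OF assms(1) this] show ?thesis using assms(3) by (simp only: e)
qed

lemma rs_step: assumes "a \<in> D" "w \<in> W" "l w < l (w \<circ> refl a)" shows "bs w (w \<circ> refl a)"
  using step_intro assms DR by blast

lemma bs_pos: assumes "bs u v" "v \<in> W" shows "\<exists>b. pos b \<and> pos (u b) \<and> v = u \<circ> refl b"
proof -
  obtain g where g: "u \<in> W" "g \<in> R" "v = u \<circ> refl g" "l u < l v" using assms(1) by (auto simp: bruhat_step_def)
  obtain b where b: "pos b" "refl b = refl g"
  proof (cases "pos g")
    case True thus ?thesis using that by blast
  next
    case False hence "neg g" using pos_or_neg g(2) by blast
    hence "pos (-g)" by (rule neg_uminus)
    thus ?thesis using that refl_neg by blast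
  qed
  have "pos (u b)" using len_iff[OF g(1) _ b(1)] g(3,4) b(2) assms(2) by simp
  thus ?thesis using b g by metis
qed

lemma K_left: assumes "bs u v" "v \<in> W" "a \<in> D" shows "refl a \<circ> u = v \<or> bs (refl a \<circ> u) (refl a \<circ> v)"
proof -
  obtain b where b: "pos b" "pos (u b)" "v = u \<circ> refl b" using bs_pos assms by blast
  have uW: "u \<in> W" using bs_W assms by blast
  show ?thesis
  proof (cases "u b = a")
    case True
    have "refl (u b) \<circ> u = u \<circ> refl b" by (rule refl_conj[OF orth_rg[OF uW]])
    thus ?thesis using True b by simp
  next
    case False
    have p: "pos (refl a (u b))" using pos_refl_simple[OF assms(3) b(2) False] .
    have xW: "refl a \<circ> u \<in> W" using uW assms rg_comp W_refl by blast
    have e: "refl a \<circ> v = (refl a \<circ> u) \<circ> refl b" using b(3) by (simp add: comp_assoc)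
    have vW: "(refl a \<circ> u) \<circ> refl b \<in> W" using e assms rg_comp W_refl by metis
    have "l (refl a \<circ> u) < l ((refl a \<circ> u) \<circ> refl b)" using len_iff[OF xW vW b(1)] p by simp
    hence "bs (refl a \<circ> u) ((refl a \<circ> u) \<circ> refl b)" using step_intro xW posR b(1) by blast
    thus ?thesis using e by simp
  qed
qed

lemma K_right: assumes "bs u v" "v \<in> W" "a \<in> D" shows "u \<circ> refl a = v \<or> bs (u \<circ> refl a) (v \<circ> refl a)"
proof -
  obtain b where b: "pos b" "pos (u b)" "v = u \<circ> refl b" using bs_pos assms by blast
  have uW: "u \<in> W" using bs_W assms by blast
  show ?thesis
  proof (cases "b = a")
    case True thus ?thesis using b by simp
  next
    case False
    define b' where "b' = refl a b"
    have p: "pos b'" unfolding b'_def using pos_refl_simple[OF assms(3) b(1) False] .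
    have bb: "refl a b' = b" unfolding b'_def by (simp add: refl_refl)
    have c: "refl (refl a b') \<circ> refl a = refl a \<circ> refl b'" by (rule refl_conj[OF orth_refl])
    have xW: "u \<circ> refl a \<in> W" using uW assms rg_comp W_refl by blast
    have e: "v \<circ> refl a = (u \<circ> refl a) \<circ> refl b'" using b(3) c bb by (simp add: comp_assoc)
    have vW: "(u \<circ> refl a) \<circ> refl b' \<in> W" using e assms rg_comp W_refl by metis
    have "(u \<circ> refl a) b' = u b" using bb by simp
    hence "l (u \<circ> refl a) < l ((u \<circ> refl a) \<circ> refl b')" using len_iff[OF xW vW p] b(2) by simp
    hence "bs (u \<circ> refl a) ((u \<circ> refl a) \<circ> refl b')" using step_intro xW posR p by blast
    thus ?thesis using e by simp
  qed
qed

lemma Z1: assumes "ble u w" "w \<in> W" "a \<in> D" shows "ble (refl a \<circ> u) w \<or> ble (refl a \<circ> u) (refl a \<circ> w)"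
  using assms(1) unfolding bruhat_le_def
proof (induction rule: converse_rtranclp_induct)
  case base thus ?case by simp
next
  case (step u v)
  have vW: "v \<in> W" using ble_W[OF step(2)[folded bruhat_le_def] assms(2)] .
  from K_left[OF step(1) vW assms(3)] show ?case
  proof
    assume "refl a \<circ> u = v" thus ?case using step(2) by simp
  next
    assume "bs (refl a \<circ> u) (refl a \<circ> v)"
    thus ?case using step(3) by (meson converse_rtranclp_into_rtranclp)
  qed
qed

lemma Z2: assumes "ble u w" "w \<in> W" "a \<in> D" "l (refl a \<circ> w) < l w"
  shows "ble u (refl a \<circ> w) \<or> ble (refl a \<circ> u) (refl a \<circ> w)"
  using assms(1) unfolding bruhat_le_def
proof (induction rule: converse_rtranclp_induct)
  case base thus ?case by simp
next
  case (step u v)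
  have vW: "v \<in> W" using ble_W[OF step(2)[folded bruhat_le_def] assms(2)] .
  from step(3) show ?case
  proof
    assume "(bs)\<^sup>*\<^sup>* v (refl a \<circ> w)" thus ?case using step(1) by (meson converse_rtranclp_into_rtranclp)
  next
    assume h: "(bs)\<^sup>*\<^sup>* (refl a \<circ> v) (refl a \<circ> w)"
    from K_left[OF step(1) vW assms(3)] show ?case
    proof
      assume "refl a \<circ> u = v"
      hence "u = refl a \<circ> v" by (metis comp_assoc id_comp refl_refl_comp)
      thus ?case using h by metis
    next
      assume "bs (refl a \<circ> u) (refl a \<circ> v)"
      thus ?case using h by (meson converse_rtranclp_into_rtranclp)
    qed
  qed
qed

lemma Z2R: assumes "ble u w" "w \<in> W" "a \<in> D" "l (w \<circ> refl a) < l w"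
  shows "ble u (w \<circ> refl a) \<or> ble (u \<circ> refl a) (w \<circ> refl a)"
  using assms(1) unfolding bruhat_le_def
proof (induction rule: converse_rtranclp_induct)
  case base thus ?case by simp
next
  case (step u v)
  have vW: "v \<in> W" using ble_W[OF step(2)[folded bruhat_le_def] assms(2)] .
  from step(3) show ?case
  proof
    assume "(bs)\<^sup>*\<^sup>* v (w \<circ> refl a)" thus ?case using step(1) by (meson converse_rtranclp_into_rtranclp)
  next
    assume h: "(bs)\<^sup>*\<^sup>* (v \<circ> refl a) (w \<circ> refl a)"
    from K_right[OF step(1) vW assms(3)] show ?case
    proof
      assume "u \<circ> refl a = v"
      hence "u = v \<circ> refl a" by (metis comp_assoc comp_id refl_refl_comp)
      thus ?case using h by metis
    next
      assume "bs (u \<circ> refl a) (v \<circ> refl a)"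
      thus ?case using h by (meson converse_rtranclp_into_rtranclp)
    qed
  qed
qed

lemma lmul_W: "a \<in> D \<Longrightarrow> w \<in> W \<Longrightarrow> refl a \<circ> w \<in> W" using rg_comp W_refl by blast
lemma rmul_W: "a \<in> D \<Longrightarrow> w \<in> W \<Longrightarrow> w \<circ> refl a \<in> W" using rg_comp W_refl by blast
lemma refl_cancel[simp]: "refl a \<circ> (refl a \<circ> w) = w" by (simp only: comp_assoc[symmetric] refl_refl_comp id_comp)
lemma refl_cancel_r[simp]: "(w \<circ> refl a) \<circ> refl a = w" by (simp only: comp_assoc refl_refl_comp comp_id)

lemma ldown_ble: "a \<in> D \<Longrightarrow> w \<in> W \<Longrightarrow> l (refl a \<circ> w) < l w \<Longrightarrow> ble (refl a \<circ> w) w"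
  using ls_step' bs_ble by blast
lemma lup_ble: "a \<in> D \<Longrightarrow> w \<in> W \<Longrightarrow> l w < l (refl a \<circ> w) \<Longrightarrow> ble w (refl a \<circ> w)"
  using ls_step bs_ble by blast

definition minJ :: "'a set \<Rightarrow> ('a \<Rightarrow> 'a) set" where "minJ J = {w \<in> W. \<forall>a\<in>J. pos (w a)}"

lemma minJ_W: "x \<in> minJ J \<Longrightarrow> x \<in> W" by (simp add: minJ_def)
lemma minJ_pos: "x \<in> minJ J \<Longrightarrow> a \<in> J \<Longrightarrow> pos (x a)" by (simp add: minJ_def)

lemma span_refl: assumes "c \<in> J" "v \<in> span J" shows "refl c v \<in> span J"
  unfolding refl_def by (rule span_diff[OF assms(2) span_scale[OF span_base[OF assms(1)]]])

lemma prodl_span: "set ys \<subseteq> J \<Longrightarrow> v \<in> span J \<Longrightarrow> prodl ys v \<in> span J"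
  by (induction ys) (auto intro: span_refl)

lemma pos_span: assumes "J \<subseteq> D" "pos g" "g \<in> span J"
  shows "\<exists>c. g = (\<Sum>d\<in>D. c d *\<^sub>R d) \<and> (\<forall>d\<in>D. c d \<ge> 0) \<and> (\<forall>d\<in>D-J. c d = 0)"
proof -
  from assms(2) have b': "g \<in> R \<and> (\<exists>c. g = (\<Sum>a\<in>D. c a *\<^sub>R a) \<and> (\<forall>a\<in>D. c a \<ge> 0))" unfolding pos_def .
  from conjunct2[OF b'] obtain c where cc: "g = (\<Sum>x\<in>D. c x *\<^sub>R x) \<and> (\<forall>x\<in>D. c x \<ge> 0)" ..
  have fJ: "finite J" using assms(1) finD finite_subset by blast
  obtain e where e: "g = (\<Sum>d\<in>J. e d *\<^sub>R d)" using assms(3) span_finite[OF fJ] by blast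
  define e' where "e' d = (if d \<in> J then e d else 0)" for d
  have "(\<Sum>d\<in>D. e' d *\<^sub>R d) = (\<Sum>d\<in>D. if d \<in> J then e d *\<^sub>R d else 0)"
    by (rule sum.cong) (auto simp: e'_def)
  also have "\<dots> = (\<Sum>d\<in>D \<inter> J. e d *\<^sub>R d)" by (rule sum.inter_restrict[OF finD, symmetric])
  also have "D \<inter> J = J" using assms(1) by blast
  finally have "(\<Sum>d\<in>D. c d *\<^sub>R d) = (\<Sum>d\<in>D. e' d *\<^sub>R d)" using e cc by simp
  hence ce: "\<And>d. d \<in> D \<Longrightarrow> c d = e' d" using coef_unique by blast
  show ?thesis
    by (rule exI[of _ c]) (use cc ce in \<open>auto simp: e'_def\<close>)
qed

lemma pos_minJ: assumes "J \<subseteq> D" "x \<in> minJ J" "pos g" "g \<in> span J" shows "pos (x g)"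
proof -
  obtain c where c: "g = (\<Sum>d\<in>D. c d *\<^sub>R d)" "\<forall>d\<in>D. c d \<ge> 0" "\<forall>d\<in>D-J. c d = 0"
    using pos_span assms by blast
  have xW: "x \<in> W" using assms(2) minJ_W by blast
  have "\<forall>d\<in>J. \<exists>p. x d = (\<Sum>e\<in>D. p e *\<^sub>R e) \<and> (\<forall>e\<in>D. p e \<ge> 0)"
  proof
    fix d assume "d \<in> J"
    hence "pos (x d)" using minJ_pos assms(2) by blast
    hence b': "x d \<in> R \<and> (\<exists>p. x d = (\<Sum>e\<in>D. p e *\<^sub>R e) \<and> (\<forall>e\<in>D. p e \<ge> 0))" unfolding pos_def .
    thus "\<exists>p. x d = (\<Sum>e\<in>D. p e *\<^sub>R e) \<and> (\<forall>e\<in>D. p e \<ge> 0)" by (rule conjunct2)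
  qed
  from bchoice[OF this] obtain P where P: "\<forall>d\<in>J. x d = (\<Sum>e\<in>D. P d e *\<^sub>R e) \<and> (\<forall>e\<in>D. P d e \<ge> 0)" by blast
  have lx: "linear x" using orth_rg xW orth_lin by blast
  have "x g = (\<Sum>d\<in>D. c d *\<^sub>R x d)" using c(1) lx by (simp add: linear_sum linear_cmul)
  also have "\<dots> = (\<Sum>d\<in>D. c d *\<^sub>R (\<Sum>e\<in>D. P d e *\<^sub>R e))"
  proof (rule sum.cong)
    fix d assume d: "d \<in> D"
    show "c d *\<^sub>R x d = c d *\<^sub>R (\<Sum>e\<in>D. P d e *\<^sub>R e)"
    proof (cases "d \<in> J")
      case True thus ?thesis using P by simp
    next
      case False thus ?thesis using c(3) d by simp
    qed
  qed simp
  also have "\<dots> = (\<Sum>d\<in>D. \<Sum>e\<in>D. (c d * P d e) *\<^sub>R e)" by (simp add: scaleR_sum_right)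
  also have "\<dots> = (\<Sum>e\<in>D. \<Sum>d\<in>D. (c d * P d e) *\<^sub>R e)" by (rule sum.swap)
  also have "\<dots> = (\<Sum>e\<in>D. (\<Sum>d\<in>D. c d * P d e) *\<^sub>R e)" by (simp add: scaleR_sum_left)
  finally have xg: "x g = (\<Sum>e\<in>D. (\<Sum>d\<in>D. c d * P d e) *\<^sub>R e)" .
  have nn: "\<forall>e\<in>D. (\<Sum>d\<in>D. c d * P d e) \<ge> 0"
  proof
    fix e assume e: "e \<in> D"
    show "(\<Sum>d\<in>D. c d * P d e) \<ge> 0"
    proof (rule sum_nonneg)
      fix d assume d: "d \<in> D"
      show "c d * P d e \<ge> 0"
      proof (cases "d \<in> J")
        case True thus ?thesis using P c(2) d e by simp
      next
        case False thus ?thesis using c(3) d by simp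
      qed
    qed
  qed
  have "x g \<in> R" using W_R' xW posR assms(3) by blast
  moreover have "\<exists>p. x g = (\<Sum>e\<in>D. p e *\<^sub>R e) \<and> (\<forall>e\<in>D. p e \<ge> 0)"
    by (rule exI[of _ "\<lambda>e. \<Sum>d\<in>D. c d * P d e"]) (simp add: xg nn)
  ultimately show ?thesis unfolding pos_def by blast
qed

lemma minJ_id: "J \<subseteq> D \<Longrightarrow> id \<in> minJ J"
  using pos_simple by (auto simp: minJ_def intro: refl_group.id_in)

lemma add_len_list: assumes "J \<subseteq> D" "x \<in> minJ J"
  shows "set zs \<subseteq> J \<Longrightarrow> (\<forall>ys. set ys \<subseteq> J \<and> prodl ys = prodl zs \<longrightarrow> length zs \<le> length ys)
     \<Longrightarrow> l (x \<circ> prodl zs) = l x + length zs"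
proof (induction zs rule: rev_induct)
  case Nil thus ?case by simp
next
  case (snoc a ys)
  have aJ: "a \<in> J" and ysJ: "set ys \<subseteq> J" using snoc.prems by auto
  have aD: "a \<in> D" and ysD: "set ys \<subseteq> D" using aJ ysJ assms(1) by auto
  have ea: "prodl (ys @ [a]) = prodl ys \<circ> refl a" by (simp add: prodl_append)
  have minys: "\<forall>ys'. set ys' \<subseteq> J \<and> prodl ys' = prodl ys \<longrightarrow> length ys \<le> length ys'"
  proof (intro allI impI)
    fix ys' assume h: "set ys' \<subseteq> J \<and> prodl ys' = prodl ys"
    have "prodl (ys' @ [a]) = prodl (ys @ [a])" using h by (simp add: prodl_append)
    moreover have "set (ys' @ [a]) \<subseteq> J" using h aJ by simp
    ultimately have "length (ys @ [a]) \<le> length (ys' @ [a])" using snoc.prems(2) by blast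
    thus "length ys \<le> length ys'" by simp
  qed
  have IH: "l (x \<circ> prodl ys) = l x + length ys" using snoc.IH ysJ minys by blast
  have gR: "prodl ys a \<in> R" using W_R' rg_prodl[OF ysD] DR aD by blast
  have pg: "pos (prodl ys a)"
  proof (rule ccontr)
    assume "\<not> pos (prodl ys a)" hence "neg (prodl ys a)" using gR pos_or_neg by blast
    then obtain ys' where ys': "set ys' \<subseteq> set ys" "length ys' < length ys" "prodl ys' = prodl ys \<circ> refl a"
      using root_lemma[OF ysD pos_simple[OF aD]] by blast
    have "set ys' \<subseteq> J" using ys'(1) ysJ by blast
    moreover have "prodl ys' = prodl (ys @ [a])" using ys'(3) ea by simp
    ultimately have "length (ys @ [a]) \<le> length ys'" using snoc.prems(2) by blast
    thus False using ys'(2) by simp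
  qed
  have "prodl ys a \<in> span J" using prodl_span[OF ysJ span_base[OF aJ]] .
  hence "pos (x (prodl ys a))" using pos_minJ assms pg by blast
  hence py: "pos ((x \<circ> prodl ys) a)" by simp
  have yW: "x \<circ> prodl ys \<in> W" using rg_comp minJ_W[OF assms(2)] rg_prodl[OF ysD] by blast
  have "l (x \<circ> prodl ys) < l ((x \<circ> prodl ys) \<circ> refl a)"
    using len_up[OF yW rmul_W[OF aD yW] pos_simple[OF aD] py] .
  hence "l ((x \<circ> prodl ys) \<circ> refl a) = l (x \<circ> prodl ys) + 1" using len_rmul[OF aD yW] by linarith
  hence h: "l ((x \<circ> prodl ys) \<circ> refl a) = l x + length ys + 1" using IH by linarith
  have e2: "x \<circ> prodl (ys @ [a]) = (x \<circ> prodl ys) \<circ> refl a" using ea by (simp add: comp_assoc)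
  show ?case unfolding e2 length_append_singleton using h by linarith
qed

lemma add_len: assumes "J \<subseteq> D" "x \<in> minJ J" "y \<in> refl_group J" shows "l (x \<circ> y) = l x + l y"
proof -
  obtain zs0 where z0: "set zs0 \<subseteq> J \<and> prodl zs0 = y" using rg_ex assms(3) by metis
  obtain zs where zs: "set zs \<subseteq> J \<and> prodl zs = y" "\<forall>ys. set ys \<subseteq> J \<and> prodl ys = y \<longrightarrow> length zs \<le> length ys"
    using ex_has_least_nat[of "\<lambda>zs. set zs \<subseteq> J \<and> prodl zs = y" zs0 length] z0 by blast
  have 1: "l (x \<circ> y) = l x + length zs" using add_len_list[OF assms(1,2), of zs] zs by simp
  have 2: "l (id \<circ> y) = l id + length zs" using add_len_list[OF assms(1) minJ_id[OF assms(1)], of zs] zs by simp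
  show ?thesis using 1 2 by simp
qed

lemma rgJ_W: "J \<subseteq> D \<Longrightarrow> y \<in> refl_group J \<Longrightarrow> y \<in> W" using rg_mono by blast

lemma coset_W: "J \<subseteq> D \<Longrightarrow> w \<in> W \<Longrightarrow> coset J w \<subseteq> W"
  unfolding coset_def using rg_comp rgJ_W by blast

lemma coset_self: "w \<in> coset J w"
  unfolding coset_def by (rule image_eqI[of _ _ id]) (auto intro: refl_group.id_in)

lemma coset_elem: "v \<in> coset J w \<Longrightarrow> \<exists>y\<in>refl_group J. v = w \<circ> y"
  unfolding coset_def by blast

lemma coset_mult: assumes "z \<in> refl_group J" shows "coset J (w \<circ> z) = coset J w"
proof -
  obtain z' where z': "z' \<in> refl_group J" "z' \<circ> z = id" "z \<circ> z' = id" using rg_inv[OF assms] by blast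
  show ?thesis unfolding coset_def
  proof (intro equalityI subsetI)
    fix f assume "f \<in> (\<lambda>u. (w \<circ> z) \<circ> u) ` refl_group J"
    then obtain u where u: "u \<in> refl_group J" "f = (w \<circ> z) \<circ> u" by blast
    have "f = w \<circ> (z \<circ> u)" by (simp only: comp_assoc u(2))
    thus "f \<in> (\<lambda>u. w \<circ> u) ` refl_group J" using rg_comp[OF assms u(1)] by blast
  next
    fix f assume "f \<in> (\<lambda>u. w \<circ> u) ` refl_group J"
    then obtain u where u: "u \<in> refl_group J" "f = w \<circ> u" by blast
    have "(w \<circ> z) \<circ> (z' \<circ> u) = w \<circ> ((z \<circ> z') \<circ> u)" by (simp only: comp_assoc)
    also have "\<dots> = f" by (simp only: z'(3) id_comp u(2))
    finally have "f = (w \<circ> z) \<circ> (z' \<circ> u)" by simp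
    thus "f \<in> (\<lambda>u. (w \<circ> z) \<circ> u) ` refl_group J" using rg_comp[OF z'(1) u(1)] by blast
  qed
qed

lemma coset_eq: "v \<in> coset J w \<Longrightarrow> coset J v = coset J w"
  using coset_elem coset_mult by metis

lemma coset_lmul: "coset J (g \<circ> w) = (\<lambda>f. g \<circ> f) ` coset J w"
  unfolding coset_def by (simp add: image_image comp_assoc)

lemma coset_cancel: assumes "coset J (refl a \<circ> u) = coset J (refl a \<circ> w)" shows "coset J u = coset J w"
proof -
  have "coset J u = coset J (refl a \<circ> (refl a \<circ> u))" by simp
  also have "\<dots> = (\<lambda>f. refl a \<circ> f) ` coset J (refl a \<circ> u)" by (rule coset_lmul)
  also have "\<dots> = (\<lambda>f. refl a \<circ> f) ` coset J (refl a \<circ> w)" using assms by simp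
  also have "\<dots> = coset J (refl a \<circ> (refl a \<circ> w))" by (rule coset_lmul[symmetric])
  also have "\<dots> = coset J w" by simp
  finally show ?thesis .
qed

lemma minJ_ex: assumes "J \<subseteq> D" "w \<in> W" shows "\<exists>x. x \<in> minJ J \<and> x \<in> coset J w"
proof -
  obtain x where x: "x \<in> coset J w" "\<forall>y. y \<in> coset J w \<longrightarrow> l x \<le> l y"
    using ex_has_least_nat[of "\<lambda>y. y \<in> coset J w" w l] coset_self by blast
  have xW: "x \<in> W" using coset_W assms x(1) by blast
  have "\<forall>a\<in>J. pos (x a)"
  proof (rule ballI, rule ccontr)
    fix a assume a: "a \<in> J" "\<not> pos (x a)"
    have aD: "a \<in> D" using a assms(1) by blast
    have "neg (x a)" using a pos_or_neg W_R' xW DR aD by blast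
    hence d: "l (x \<circ> refl a) < l x" using len_down[OF xW pos_simple[OF aD]] by blast
    have "x \<circ> refl a \<in> coset J x" unfolding coset_def using rg_refl[OF a(1)] by blast
    hence "x \<circ> refl a \<in> coset J w" using coset_eq[OF x(1)] by simp
    thus False using x(2) d by fastforce
  qed
  thus ?thesis using xW x(1) by (auto simp: minJ_def)
qed

lemma minJ_unique: assumes "J \<subseteq> D" "x \<in> minJ J" "x' \<in> minJ J" "coset J x = coset J x'" shows "x = x'"
proof -
  have "x' \<in> coset J x" using assms(4) coset_self by metis
  then obtain z where z: "z \<in> refl_group J" "x' = x \<circ> z" using coset_elem by blast
  have "x \<in> coset J x'" using assms(4) coset_self by metis
  then obtain z' where z': "z' \<in> refl_group J" "x = x' \<circ> z'" using coset_elem by blast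
  have "l x' = l x + l z" using add_len[OF assms(1,2) z(1)] z(2) by simp
  moreover have "l x = l x' + l z'" using add_len[OF assms(1,3) z'(1)] z'(2) by simp
  ultimately have "l z = 0" by simp
  hence "z = id" using wlen_0 rgJ_W[OF assms(1) z(1)] by blast
  thus ?thesis using z(2) by simp
qed

lemma minrep_iff: assumes "J \<subseteq> D" "w \<in> W" shows "min_rep D (coset J w) c \<longleftrightarrow> c \<in> minJ J \<and> c \<in> coset J w"
proof
  assume m: "min_rep D (coset J w) c"
  hence c: "c \<in> coset J w" "\<forall>c'\<in>coset J w. l c \<le> l c'" by (auto simp: min_rep_def)
  have cW: "c \<in> W" using coset_W assms c(1) by blast
  have "\<forall>a\<in>J. pos (c a)"
  proof (rule ballI, rule ccontr)
    fix a assume a: "a \<in> J" "\<not> pos (c a)"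
    have aD: "a \<in> D" using a assms(1) by blast
    have "neg (c a)" using a pos_or_neg W_R' cW DR aD by blast
    hence d: "l (c \<circ> refl a) < l c" using len_down[OF cW pos_simple[OF aD]] by blast
    have "c \<circ> refl a \<in> coset J c" unfolding coset_def using rg_refl[OF a(1)] by blast
    hence "c \<circ> refl a \<in> coset J w" using coset_eq[OF c(1)] by simp
    thus False using c(2) d by fastforce
  qed
  thus "c \<in> minJ J \<and> c \<in> coset J w" using cW c(1) by (auto simp: minJ_def)
next
  assume c: "c \<in> minJ J \<and> c \<in> coset J w"
  have "\<forall>c'\<in>coset J w. l c \<le> l c'"
  proof
    fix c' assume "c' \<in> coset J w"
    hence "c' \<in> coset J c" using coset_eq c by metis
    then obtain z where "z \<in> refl_group J" "c' = c \<circ> z" using coset_elem by blast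
    thus "l c \<le> l c'" using add_len[OF assms(1)] c by simp
  qed
  thus "min_rep D (coset J w) c" using c by (simp add: min_rep_def)
qed

definition mrep :: "'a set \<Rightarrow> ('a \<Rightarrow> 'a) \<Rightarrow> ('a \<Rightarrow> 'a)" where
  "mrep J w = (SOME x. x \<in> minJ J \<and> x \<in> coset J w)"

lemma mrep_prop: "J \<subseteq> D \<Longrightarrow> w \<in> W \<Longrightarrow> mrep J w \<in> minJ J \<and> mrep J w \<in> coset J w"
  unfolding mrep_def using minJ_ex by (rule someI_ex) 

lemma mrep_eq: assumes "J \<subseteq> D" "w \<in> W" "x \<in> minJ J" "x \<in> coset J w" shows "mrep J w = x"
proof -
  have "coset J (mrep J w) = coset J w" using mrep_prop[OF assms(1,2)] coset_eq by blast
  moreover have "coset J x = coset J w" using assms(4) coset_eq by blast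
  ultimately show ?thesis using minJ_unique[OF assms(1) _ assms(3)] mrep_prop[OF assms(1,2)] by metis
qed

lemma coset_mrep: "J \<subseteq> D \<Longrightarrow> w \<in> W \<Longrightarrow> coset J (mrep J w) = coset J w"
  using mrep_prop coset_eq by blast

lemma lemB: assumes "x \<in> minJ J" "a \<in> D" "refl a \<circ> x \<notin> minJ J" shows "\<exists>c\<in>J. refl a \<circ> x = x \<circ> refl c"
proof -
  have xW: "x \<in> W" using minJ_W assms(1) .
  have "refl a \<circ> x \<in> W" using lmul_W assms(2) xW .
  then obtain c where c: "c \<in> J" "\<not> pos ((refl a \<circ> x) c)" using assms(3) by (auto simp: minJ_def)
  have pc: "pos (x c)" using minJ_pos assms(1) c(1) .
  have "x c = a"
  proof (rule ccontr)
    assume "x c \<noteq> a"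
    hence "pos (refl a (x c))" using pos_refl_simple[OF assms(2) pc] by blast
    thus False using c(2) by simp
  qed
  moreover have "refl (x c) \<circ> x = x \<circ> refl c" by (rule refl_conj[OF orth_rg[OF xW]])
  ultimately show ?thesis using c(1) by blast
qed

lemma lemA: assumes "J \<subseteq> D" "x \<in> minJ J" "a \<in> D" "l (refl a \<circ> x) < l x" shows "refl a \<circ> x \<in> minJ J"
proof (rule ccontr)
  assume "refl a \<circ> x \<notin> minJ J"
  then obtain c where c: "c \<in> J" "refl a \<circ> x = x \<circ> refl c" using lemB assms by blast
  have cD: "c \<in> D" using c assms(1) by blast
  have xW: "x \<in> W" using minJ_W assms(2) .
  have "l x < l (x \<circ> refl c)" using len_up[OF xW rmul_W[OF cD xW] pos_simple[OF cD] minJ_pos[OF assms(2) c(1)]] .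
  thus False using assms(4) c(2) by simp
qed

lemma minJ_rmul: assumes "J \<subseteq> D" "x \<in> minJ J" "c \<in> J" shows "bs x (x \<circ> refl c)"
proof -
  have cD: "c \<in> D" using assms by blast
  have xW: "x \<in> W" using minJ_W assms(2) .
  have "l x < l (x \<circ> refl c)" using len_up[OF xW rmul_W[OF cD xW] pos_simple[OF cD] minJ_pos[OF assms(2,3)]] .
  thus ?thesis using rs_step cD xW by blast
qed

lemma mrep_lmul: assumes "J \<subseteq> D" "w \<in> W" "a \<in> D"
  shows "(refl a \<circ> mrep J w \<in> minJ J \<longrightarrow> mrep J (refl a \<circ> w) = refl a \<circ> mrep J w)
       \<and> (refl a \<circ> mrep J w \<notin> minJ J \<longrightarrow> mrep J (refl a \<circ> w) = mrep J w)"
proof -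
  let ?z = "mrep J w"
  have zm: "?z \<in> minJ J" using mrep_prop assms by blast
  have "w \<in> coset J ?z" using coset_mrep[OF assms(1,2)] coset_self by metis
  then obtain y where y: "y \<in> refl_group J" "w = ?z \<circ> y" using coset_elem by blast
  have "refl a \<circ> w = (refl a \<circ> ?z) \<circ> y" using y(2) by (simp add: comp_assoc)
  hence cc: "coset J (refl a \<circ> w) = coset J (refl a \<circ> ?z)" using coset_mult[OF y(1)] by simp
  have sw: "refl a \<circ> w \<in> W" using lmul_W assms by blast
  show ?thesis
  proof (intro conjI impI)
    assume "refl a \<circ> ?z \<in> minJ J"
    thus "mrep J (refl a \<circ> w) = refl a \<circ> ?z" using mrep_eq[OF assms(1) sw] cc coset_self by metis
  next
    assume "refl a \<circ> ?z \<notin> minJ J"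
    then obtain c where c: "c \<in> J" "refl a \<circ> ?z = ?z \<circ> refl c" using lemB zm assms(3) by blast
    have "coset J (refl a \<circ> ?z) = coset J ?z" using c coset_mult rg_refl by metis
    hence "?z \<in> coset J (refl a \<circ> w)" using cc coset_self by metis
    thus "mrep J (refl a \<circ> w) = ?z" using mrep_eq[OF assms(1) sw zm] by blast
  qed
qed

end

context RS begin
lemma mrep_lmul_le: assumes J: "J \<subseteq> D" and wW: "w \<in> W" and a: "a \<in> D" "l (refl a \<circ> w) < l w"
  shows "ble (mrep J (refl a \<circ> w)) (mrep J w)"
    and "refl a \<circ> mrep J w \<in> minJ J \<Longrightarrow> l (refl a \<circ> mrep J w) < l (mrep J w)"
proof -
  let ?z = "mrep J w"
  have zm: "?z \<in> minJ J" using mrep_prop J wW by blast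
  have zW: "?z \<in> W" using minJ_W zm .
  have "w \<in> coset J ?z" using coset_mrep[OF J wW] coset_self by metis
  then obtain y where y: "y \<in> refl_group J" "w = ?z \<circ> y" using coset_elem by blast
  have lw: "l w = l ?z + l y" using add_len[OF J zm y(1)] y(2) by simp
  have e: "refl a \<circ> w = (refl a \<circ> ?z) \<circ> y" using y(2) by (simp add: comp_assoc)
  show lt: "refl a \<circ> ?z \<in> minJ J \<Longrightarrow> l (refl a \<circ> ?z) < l ?z"
  proof -
    assume m: "refl a \<circ> ?z \<in> minJ J"
    have "l (refl a \<circ> w) = l (refl a \<circ> ?z) + l y" using add_len[OF J m y(1)] e by simp
    thus ?thesis using lw a(2) by linarith
  qed
  show "ble (mrep J (refl a \<circ> w)) ?z"
  proof (cases "refl a \<circ> ?z \<in> minJ J")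
    case True
    hence "mrep J (refl a \<circ> w) = refl a \<circ> ?z" using mrep_lmul[OF J wW a(1)] by blast
    thus ?thesis using ldown_ble[OF a(1) zW lt[OF True]] by simp
  next
    case False
    hence "mrep J (refl a \<circ> w) = ?z" using mrep_lmul[OF J wW a(1)] by blast
    thus ?thesis by simp
  qed
qed

lemma mono_proj_aux: assumes J: "J \<subseteq> D"
  shows "\<forall>w u. l w = n \<longrightarrow> ble u w \<longrightarrow> w \<in> W \<longrightarrow> ble (mrep J u) (mrep J w)"
proof (induction n rule: less_induct)
  case (less n)
  show ?case
  proof (intro allI impI)
  fix w u assume ln: "l w = n" and p1: "ble u w" and p2: "w \<in> W"
  have uW: "u \<in> W" using ble_W p1 p2 by blast
  show "ble (mrep J u) (mrep J w)"
  proof (cases "w = id")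
    case True
    hence "u = id" using ble_len[OF p1] by auto
    thus ?thesis using True by simp
  next
    case False
    obtain a where a: "a \<in> D" "l (refl a \<circ> w) < l w" using ldesc_ex p2 False by blast
    define z where "z = mrep J w"
    define p where "p = mrep J u"
    have zm: "z \<in> minJ J" using mrep_prop[OF J p2] z_def by auto
    have pm: "p \<in> minJ J" using mrep_prop[OF J uW] p_def by auto
    have zW: "z \<in> W" and pW: "p \<in> W" using zm pm minJ_W by auto
    have swW: "refl a \<circ> w \<in> W" using lmul_W a p2 by blast
    have "l (refl a \<circ> w) < n" using a(2) ln by simp
    from less.IH[OF this] have H: "\<forall>w' u'. l w' = l (refl a \<circ> w) \<longrightarrow> ble u' w' \<longrightarrow> w' \<in> W \<longrightarrow> ble (mrep J u') (mrep J w')" .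
    have IH: "\<And>u'. ble u' (refl a \<circ> w) \<Longrightarrow> ble (mrep J u') (mrep J (refl a \<circ> w))"
      using H swW by blast
    have mz: "ble (mrep J (refl a \<circ> w)) z" using mrep_lmul_le(1)[OF J p2 a] z_def by simp
    have szlt: "refl a \<circ> z \<in> minJ J \<Longrightarrow> l (refl a \<circ> z) < l z" using mrep_lmul_le(2)[OF J p2 a] z_def by simp
    have key: "ble p (refl a \<circ> z) \<Longrightarrow> ble p z"
    proof -
      assume h: "ble p (refl a \<circ> z)"
      show "ble p z"
      proof (cases "refl a \<circ> z \<in> minJ J")
        case True
        thus ?thesis using h ldown_ble[OF a(1) zW szlt[OF True]] ble_trans by blast
      next
        case False
        then obtain c where c: "c \<in> J" "refl a \<circ> z = z \<circ> refl c" using lemB zm a(1) by blast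
        have cD: "c \<in> D" using c J by blast
        have bz: "bs z (z \<circ> refl c)" using minJ_rmul[OF J zm c(1)] .
        have zcW: "z \<circ> refl c \<in> W" using rmul_W cD zW by blast
        have "l ((z \<circ> refl c) \<circ> refl c) < l (z \<circ> refl c)" using bs_len[OF bz] by simp
        from Z2R[OF h[unfolded c(2)] zcW cD this]
        have "ble p z \<or> ble (p \<circ> refl c) z" by simp
        thus ?thesis using minJ_rmul[OF J pm c(1)] step_ble by blast
      qed
    qed
    from Z2[OF p1 p2 a] have "ble p z"
    proof
      assume "ble u (refl a \<circ> w)"
      hence "ble p (mrep J (refl a \<circ> w))" using IH p_def by simp
      thus ?thesis using mz ble_trans by blast
    next
      assume "ble (refl a \<circ> u) (refl a \<circ> w)"
      hence hq: "ble (mrep J (refl a \<circ> u)) z" using IH mz ble_trans by blast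
      show ?thesis
      proof (cases "refl a \<circ> p \<in> minJ J")
        case False
        hence "mrep J (refl a \<circ> u) = p" using mrep_lmul[OF J uW a(1)] p_def by blast
        thus ?thesis using hq by simp
      next
        case True
        hence "mrep J (refl a \<circ> u) = refl a \<circ> p" using mrep_lmul[OF J uW a(1)] p_def by blast
        hence h2: "ble (refl a \<circ> p) z" using hq by simp
        have "l (refl a \<circ> p) = l p + 1 \<or> l (refl a \<circ> p) + 1 = l p" using len_lmul a(1) pW by blast
        thus ?thesis
        proof
          assume "l (refl a \<circ> p) = l p + 1"
          hence "ble p (refl a \<circ> p)" using lup_ble a(1) pW by simp
          thus ?thesis using h2 ble_trans by blast
        next
          assume "l (refl a \<circ> p) + 1 = l p"
          from Z1[OF h2 zW a(1)] have "ble p z \<or> ble p (refl a \<circ> z)" by simp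
          thus ?thesis using key by blast
        qed
      qed
    qed
    thus ?thesis using p_def z_def by simp
  qed
qed
qed

lemma mono_proj: assumes J: "J \<subseteq> D" shows "ble u w \<Longrightarrow> w \<in> W \<Longrightarrow> ble (mrep J u) (mrep J w)"
  using mono_proj_aux[OF J, of "l w"] by blast
lemma mainC_aux: assumes Q: "JQ \<subseteq> JP" and P: "JP \<subseteq> D"
  shows "\<forall>w u. l w = n \<longrightarrow> u \<in> minJ JQ \<longrightarrow> w \<in> minJ JQ \<longrightarrow> ble u w \<longrightarrow> coset JP u \<noteq> coset JP w \<longrightarrow>
     (\<exists>v\<in>minJ JQ. ble u v \<and> ble v w \<and> l v + 1 = l w \<and> coset JP v \<noteq> coset JP w)"
proof (induction n rule: less_induct)
  case (less n)
  show ?case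
  proof (intro allI impI)
  fix w u assume ln: "l w = n" and pr1: "u \<in> minJ JQ" and pr2: "w \<in> minJ JQ" and pr3: "ble u w" and pr4: "coset JP u \<noteq> coset JP w"
  note prems = pr1 pr2 pr3 pr4
  have QD: "JQ \<subseteq> D" using Q P by blast
  have wW: "w \<in> W" and uW: "u \<in> W" using prems minJ_W by auto
  define x where "x = mrep JP w"
  have xm: "x \<in> minJ JP" and xc: "x \<in> coset JP w" using mrep_prop[OF P wW] x_def by auto
  have xW: "x \<in> W" using xm minJ_W by blast
  have cx: "coset JP x = coset JP w" using coset_eq xc by blast
  have "x \<noteq> id"
  proof
    assume x: "x = id"
    have "ble (mrep JP u) (mrep JP w)" using mono_proj[OF P prems(3) wW] .
    hence "ble (mrep JP u) id" using x x_def by simp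
    hence "mrep JP u = id" using ble_len by fastforce
    hence "coset JP u = coset JP id" using coset_mrep[OF P uW] by simp
    thus False using cx x prems(4) by simp
  qed
  then obtain a where a: "a \<in> D" "l (refl a \<circ> x) < l x" using ldesc_ex xW by blast
  have "w \<in> coset JP x" using cx coset_self by metis
  then obtain y where y: "y \<in> refl_group JP" "w = x \<circ> y" using coset_elem by blast
  have sxm: "refl a \<circ> x \<in> minJ JP" using lemA[OF P xm a] .
  have lw: "l w = l x + l y" using add_len[OF P xm y(1)] y(2) by simp
  have esw: "refl a \<circ> w = (refl a \<circ> x) \<circ> y" using y(2) by (simp add: comp_assoc)
  have "l (refl a \<circ> w) = l (refl a \<circ> x) + l y" using add_len[OF P sxm y(1)] esw by simp
  hence swlt: "l (refl a \<circ> w) < l w" using lw a(2) by linarith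
  have swW: "refl a \<circ> w \<in> W" using lmul_W a(1) wW by blast
  have swm: "refl a \<circ> w \<in> minJ JQ" using lemA[OF QD prems(2) a(1) swlt] .
  have cne: "coset JP (refl a \<circ> w) \<noteq> coset JP w"
  proof
    assume h: "coset JP (refl a \<circ> w) = coset JP w"
    have "coset JP (refl a \<circ> w) = coset JP (refl a \<circ> x)" using esw coset_mult[OF y(1)] by simp
    hence "coset JP (refl a \<circ> x) = coset JP x" using h cx by simp
    hence "refl a \<circ> x = x" using minJ_unique[OF P sxm xm] by blast
    thus False using a(2) by simp
  qed
  have ls: "l (refl a \<circ> w) + 1 = l w" using len_lmul[OF a(1) wW] swlt by linarith
  have swle: "ble (refl a \<circ> w) w" using ldown_ble[OF a(1) wW swlt] .
  have claim0: "ble u (refl a \<circ> w) \<Longrightarrow> \<exists>v\<in>minJ JQ. ble u v \<and> ble v w \<and> l v + 1 = l w \<and> coset JP v \<noteq> coset JP w"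
    using swm swle ls cne by blast
  from Z2[OF prems(3) wW a(1) swlt] show "\<exists>v\<in>minJ JQ. ble u v \<and> ble v w \<and> l v + 1 = l w \<and> coset JP v \<noteq> coset JP w"
  proof
    assume "ble u (refl a \<circ> w)" thus ?thesis by (rule claim0)
  next
    assume h: "ble (refl a \<circ> u) (refl a \<circ> w)"
    have "l (refl a \<circ> u) = l u + 1 \<or> l (refl a \<circ> u) + 1 = l u" using len_lmul a(1) uW by blast
    thus ?thesis
    proof
      assume "l (refl a \<circ> u) = l u + 1"
      hence "ble u (refl a \<circ> u)" using lup_ble a(1) uW by simp
      thus ?thesis using h ble_trans claim0 by blast
    next
      assume sul: "l (refl a \<circ> u) + 1 = l u"
      have sum: "refl a \<circ> u \<in> minJ JQ" using lemA[OF QD prems(1) a(1)] sul by simp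
      have scne: "coset JP (refl a \<circ> u) \<noteq> coset JP (refl a \<circ> w)"
        using coset_cancel prems(4) by blast
      have "l (refl a \<circ> w) < n" using swlt ln by simp
      from less.IH[OF this] have H: "\<forall>w' u'. l w' = l (refl a \<circ> w) \<longrightarrow> u' \<in> minJ JQ \<longrightarrow> w' \<in> minJ JQ \<longrightarrow> ble u' w' \<longrightarrow> coset JP u' \<noteq> coset JP w' \<longrightarrow>
     (\<exists>v\<in>minJ JQ. ble u' v \<and> ble v w' \<and> l v + 1 = l w' \<and> coset JP v \<noteq> coset JP w')" .
      have "\<exists>v\<in>minJ JQ. ble (refl a \<circ> u) v \<and> ble v (refl a \<circ> w) \<and> l v + 1 = l (refl a \<circ> w) \<and> coset JP v \<noteq> coset JP (refl a \<circ> w)"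
        using H sum swm h scne by blast
      then obtain v1 where v1: "v1 \<in> minJ JQ" "ble (refl a \<circ> u) v1" "ble v1 (refl a \<circ> w)"
        "l v1 + 1 = l (refl a \<circ> w)" "coset JP v1 \<noteq> coset JP (refl a \<circ> w)" by blast
      have v1W: "v1 \<in> W" using v1(1) minJ_W by blast
      from Z1[OF v1(2) v1W a(1)] have "ble u v1 \<or> ble u (refl a \<circ> v1)" by simp
      thus ?thesis
      proof
        assume "ble u v1" thus ?thesis using v1(3) ble_trans claim0 by blast
      next
        assume uv: "ble u (refl a \<circ> v1)"
        have "l (refl a \<circ> v1) = l v1 + 1 \<or> l (refl a \<circ> v1) + 1 = l v1" using len_lmul a(1) v1W by blast
        thus ?thesis
        proof
          assume "l (refl a \<circ> v1) + 1 = l v1"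
          hence "ble (refl a \<circ> v1) v1" using ldown_ble a(1) v1W by simp
          thus ?thesis using uv v1(3) ble_trans claim0 by blast
        next
          assume lv: "l (refl a \<circ> v1) = l v1 + 1"
          show ?thesis
          proof (cases "refl a \<circ> v1 \<in> minJ JQ")
            case True
            from Z1[OF v1(3) swW a(1)] have "ble (refl a \<circ> v1) (refl a \<circ> w) \<or> ble (refl a \<circ> v1) w" by simp
            hence le: "ble (refl a \<circ> v1) w" using swle ble_trans by blast
            have cn: "coset JP (refl a \<circ> v1) \<noteq> coset JP w"
            proof
              assume "coset JP (refl a \<circ> v1) = coset JP w"
              hence "coset JP (refl a \<circ> v1) = coset JP (refl a \<circ> (refl a \<circ> w))" by simp
              hence "coset JP v1 = coset JP (refl a \<circ> w)" by (rule coset_cancel)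
              thus False using v1(5) by simp
            qed
            have "l (refl a \<circ> v1) + 1 = l w" using lv v1(4) ls by linarith
            thus ?thesis using True uv le cn by blast
          next
            case False
            then obtain c where c: "c \<in> JQ" "refl a \<circ> v1 = v1 \<circ> refl c" using lemB v1(1) a(1) by blast
            have cD: "c \<in> D" using c QD by blast
            have bz: "bs v1 (v1 \<circ> refl c)" using minJ_rmul[OF QD v1(1) c(1)] .
            have vcW: "v1 \<circ> refl c \<in> W" using rmul_W cD v1W by blast
            have "l ((v1 \<circ> refl c) \<circ> refl c) < l (v1 \<circ> refl c)" using bs_len[OF bz] by simp
            from Z2R[OF uv[unfolded c(2)] vcW cD this]
            have "ble u v1 \<or> ble (u \<circ> refl c) v1" by simp
            hence "ble u v1" using minJ_rmul[OF QD prems(1) c(1)] step_ble by blast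
            thus ?thesis using v1(3) ble_trans claim0 by blast
          qed
        qed
      qed
    qed
  qed
qed
qed

lemma mainC: assumes Q: "JQ \<subseteq> JP" and P: "JP \<subseteq> D"
  shows "u \<in> minJ JQ \<Longrightarrow> w \<in> minJ JQ \<Longrightarrow> ble u w \<Longrightarrow> coset JP u \<noteq> coset JP w \<Longrightarrow>
     \<exists>v\<in>minJ JQ. ble u v \<and> ble v w \<and> l v + 1 = l w \<and> coset JP v \<noteq> coset JP w"
  using mainC_aux[OF Q P, of "l w"] by blast

lemma proj_coset: assumes "J \<subseteq> K" shows "proj K (coset J w) = coset K w"
proof -
  have "\<forall>v\<in>coset J w. coset K v = coset K w"
  proof
    fix v assume "v \<in> coset J w"
    then obtain y where "y \<in> refl_group J" "v = w \<circ> y" using coset_elem by blast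
    thus "coset K v = coset K w" using coset_mult rg_mono[OF assms] by metis
  qed
  thus ?thesis unfolding proj_def using coset_self[of w J] by blast
qed

lemma quot_mr: assumes "J \<subseteq> D" "X \<in> quot D J" "min_rep D X x" shows "x \<in> minJ J \<and> X = coset J x"
proof -
  obtain w where w: "w \<in> W" "X = coset J w" using assms(2) unfolding quot_def by blast
  hence "x \<in> minJ J \<and> x \<in> coset J w" using minrep_iff[OF assms(1) w(1)] assms(3) by simp
  thus ?thesis using coset_eq w by metis
qed

lemma quot_mr_eq: assumes "J \<subseteq> D" "X \<in> quot D J" "min_rep D X x" "min_rep D X x'" shows "x = x'"
  using quot_mr[OF assms(1,2,3)] quot_mr[OF assms(1,2,4)] minJ_unique[OF assms(1)] by metis

lemma mr_coset: assumes "J \<subseteq> D" "x \<in> minJ J" shows "min_rep D (coset J x) x"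
  using minrep_iff[OF assms(1) minJ_W[OF assms(2)]] assms(2) coset_self by blast


end

theorem mainTheorem17:
  fixes R \<Delta> JQ JP :: "'a::euclidean_space set"
    and \<theta> \<phi> :: "('a \<Rightarrow> 'a) set"
  assumes "root_system R" and "is_base R \<Delta>"
    and "JQ \<subseteq> JP" and "JP \<subseteq> \<Delta>"
    and "\<theta> \<in> quot \<Delta> JQ" and "\<phi> \<in> quot \<Delta> JQ"
    and "quot_less R \<Delta> \<phi> \<theta>"
    and "quot_less R \<Delta> (proj JP \<phi>) (proj JP \<theta>)"
  shows "\<exists>\<psi>\<in>quot \<Delta> JQ. quot_covers R \<Delta> JQ \<theta> \<psi> \<and> quot_le R \<Delta> \<phi> \<psi>
           \<and> quot_less R \<Delta> (proj JP \<psi>) (proj JP \<theta>)"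
proof -
  interpret RS R \<Delta> using assms(1,2) by unfold_locales
  have QD: "JQ \<subseteq> \<Delta>" using assms(3,4) by blast
  obtain c d where cd: "min_rep \<Delta> \<phi> c" "min_rep \<Delta> \<theta> d" "bruhat_le R \<Delta> c d" and ne: "\<phi> \<noteq> \<theta>"
    using assms(7) unfolding quot_less_def quot_le_def by blast
  have c: "c \<in> minJ JQ" "\<phi> = coset JQ c" using quot_mr[OF QD assms(6) cd(1)] by auto
  have d: "d \<in> minJ JQ" "\<theta> = coset JQ d" using quot_mr[OF QD assms(5) cd(2)] by auto
  have pne: "coset JP c \<noteq> coset JP d"
    using assms(8) unfolding quot_less_def c(2) d(2) proj_coset[OF assms(3)] by blast
  obtain v where v: "v \<in> minJ JQ" "bruhat_le R \<Delta> c v" "bruhat_le R \<Delta> v d" "wlen \<Delta> v + 1 = wlen \<Delta> d"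
      "coset JP v \<noteq> coset JP d"
    using mainC[OF assms(3,4) c(1) d(1) cd(3) pne] by blast
  have vW: "v \<in> refl_group \<Delta>" using v(1) minJ_W by blast
  have dW: "d \<in> refl_group \<Delta>" using d(1) minJ_W by blast
  define \<psi> where "\<psi> = coset JQ v"
  have psiq: "\<psi> \<in> quot \<Delta> JQ" unfolding \<psi>_def quot_def using vW by blast
  have mv: "min_rep \<Delta> \<psi> v" unfolding \<psi>_def using mr_coset[OF QD v(1)] .
  have md: "min_rep \<Delta> \<theta> d" using cd(2) .
  have vd: "v \<noteq> d" using v(4) by auto
  have psine: "\<psi> \<noteq> \<theta>"
  proof
    assume "\<psi> = \<theta>"
    hence "coset JQ v = coset JQ d" using d(2) \<psi>_def by simp
    thus False using minJ_unique[OF QD v(1) d(1)] vd by blast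
  qed
  have less1: "quot_less R \<Delta> \<psi> \<theta>"
    unfolding quot_less_def quot_le_def using mv md v(3) psine by blast
  have nobetween: "\<not> (\<exists>E\<in>quot \<Delta> JQ. quot_less R \<Delta> \<psi> E \<and> quot_less R \<Delta> E \<theta>)"
  proof
    assume "\<exists>E\<in>quot \<Delta> JQ. quot_less R \<Delta> \<psi> E \<and> quot_less R \<Delta> E \<theta>"
    then obtain E where E: "E \<in> quot \<Delta> JQ" "quot_less R \<Delta> \<psi> E" "quot_less R \<Delta> E \<theta>" by blast
    obtain c1 c2 where h1: "min_rep \<Delta> \<psi> c1" "min_rep \<Delta> E c2" "bruhat_le R \<Delta> c1 c2" "\<psi> \<noteq> E"
      using E(2) unfolding quot_less_def quot_le_def by blast
    obtain c3 c4 where h2: "min_rep \<Delta> E c3" "min_rep \<Delta> \<theta> c4" "bruhat_le R \<Delta> c3 c4" "E \<noteq> \<theta>"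
      using E(3) unfolding quot_less_def quot_le_def by blast
    have "c1 = v" using quot_mr_eq[OF QD psiq h1(1) mv] .
    moreover have "c3 = c2" using quot_mr_eq[OF QD E(1) h2(1) h1(2)] .
    moreover have "c4 = d" using quot_mr_eq[OF QD assms(5) h2(2) md] .
    moreover have "E = coset JQ c2" using quot_mr[OF QD E(1) h1(2)] by blast
    ultimately have b1: "bruhat_le R \<Delta> v c2" and b2: "bruhat_le R \<Delta> c2 d"
      and e1: "c2 \<noteq> v" and e2: "c2 \<noteq> d" using h1 h2 \<psi>_def d(2) by auto
    have "wlen \<Delta> v < wlen \<Delta> c2" using ble_len[OF b1] e1 by auto
    moreover have "wlen \<Delta> c2 < wlen \<Delta> d" using ble_len[OF b2] e2 by auto
    ultimately show False using v(4) by linarith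
  qed
  have cov: "quot_covers R \<Delta> JQ \<theta> \<psi>"
    unfolding quot_covers_def using psiq assms(5) less1 nobetween by blast
  have le2: "quot_le R \<Delta> \<phi> \<psi>"
    unfolding quot_le_def using cd(1) mv v(2) by blast
  have pp: "proj JP \<psi> = coset JP v" "proj JP \<theta> = coset JP d"
    unfolding \<psi>_def d(2) by (simp_all add: proj_coset[OF assms(3)])
  have m1: "min_rep \<Delta> (coset JP v) (mrep JP v)"
    using minrep_iff[OF assms(4) vW] mrep_prop[OF assms(4) vW] by blast
  have m2: "min_rep \<Delta> (coset JP d) (mrep JP d)"
    using minrep_iff[OF assms(4) dW] mrep_prop[OF assms(4) dW] by blast
  have "bruhat_le R \<Delta> (mrep JP v) (mrep JP d)" using mono_proj[OF assms(4) v(3) dW] .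
  hence less2: "quot_less R \<Delta> (proj JP \<psi>) (proj JP \<theta>)"
    unfolding quot_less_def quot_le_def pp using m1 m2 v(5) by blast
  show ?thesis using psiq cov le2 less2 by blast
qed

end
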